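(* Let $(G,\sigma)$ be a planar, color-connected colored graph with a fixed plane embedding and vertices $s,t$ connected in $G$. If $S$ is an inclusion-minimal $s$-$t$ color separator, then the vertices of the color-intersection graph $\mathcal{G}$ corresponding to the colors in $S$ induce a connected subgraph of $\mathcal{G}$.
   Context: $\sigma:V\to 2^{[m]}$; color-connected means for each color $c$ the vertices whose color set contains $c$ induce a connected subgraph. $V(C)=\{v:\sigma(v)\cap C\ne\emptyset\}$; $S\subseteq[m]$ is an $s$-$t$ color separator if $s,t$ are disconnected in $G-V(S)$. For a face $f$ of $G$, $\sigma(f)$ is the union of $\sigma(u)\cup\sigma(v)$ over boundary edges $uv$ of $f$. The color-intersection graph $\mathcal{G}$ has a vertex $c_i$ per color $i\in[m]$ and an edge $c_ic_j$ whenever some face $f$ satisfies $\{i,j\}\subseteq\sigma(f)$. *)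

theory Defs
  imports "HOL-Analysis.Analysis"
begin

definition simple_graph :: "'v set \<Rightarrow> 'v set set \<Rightarrow> bool" where
  "simple_graph V E \<longleftrightarrow> finite V \<and> (\<forall>e\<in>E. \<exists>u v. u \<in> V \<and> v \<in> V \<and> u \<noteq> v \<and> e = {u, v})"

definition conn_in :: "'v set set \<Rightarrow> 'v set \<Rightarrow> 'v \<Rightarrow> 'v \<Rightarrow> bool" where
  "conn_in E A u v \<longleftrightarrow> u \<in> A \<and> v \<in> A \<and>
     (u, v) \<in> {(x, y). {x, y} \<in> E \<and> x \<in> A \<and> y \<in> A}\<^sup>*"

definition induces_connected :: "'v set set \<Rightarrow> 'v set \<Rightarrow> bool" where
  "induces_connected E A \<longleftrightarrow> (\<forall>u\<in>A. \<forall>v\<in>A. conn_in E A u v)"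

definition coloring :: "'v set \<Rightarrow> nat \<Rightarrow> ('v \<Rightarrow> nat set) \<Rightarrow> bool" where
  "coloring V m \<sigma> \<longleftrightarrow> (\<forall>v\<in>V. \<sigma> v \<subseteq> {1..m})"

definition color_connected :: "'v set \<Rightarrow> 'v set set \<Rightarrow> nat \<Rightarrow> ('v \<Rightarrow> nat set) \<Rightarrow> bool" where
  "color_connected V E m \<sigma> \<longleftrightarrow> (\<forall>c\<in>{1..m}. induces_connected E {v\<in>V. c \<in> \<sigma> v})"

definition verts_of_colors :: "'v set \<Rightarrow> ('v \<Rightarrow> nat set) \<Rightarrow> nat set \<Rightarrow> 'v set" where
  "verts_of_colors V \<sigma> C = {v\<in>V. \<sigma> v \<inter> C \<noteq> {}}"

definition color_separator ::
    "'v set \<Rightarrow> 'v set set \<Rightarrow> nat \<Rightarrow> ('v \<Rightarrow> nat set) \<Rightarrow> 'v \<Rightarrow> 'v \<Rightarrow> nat set \<Rightarrow> bool" where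
  "color_separator V E m \<sigma> s t S \<longleftrightarrow> S \<subseteq> {1..m} \<and>
     \<not> conn_in E (V - verts_of_colors V \<sigma> S) s t"

definition minimal_color_separator ::
    "'v set \<Rightarrow> 'v set set \<Rightarrow> nat \<Rightarrow> ('v \<Rightarrow> nat set) \<Rightarrow> 'v \<Rightarrow> 'v \<Rightarrow> nat set \<Rightarrow> bool" where
  "minimal_color_separator V E m \<sigma> s t S \<longleftrightarrow> color_separator V E m \<sigma> s t S \<and>
     (\<forall>S'. S' \<subset> S \<longrightarrow> \<not> color_separator V E m \<sigma> s t S')"

definition plane_embedding ::
    "'v set \<Rightarrow> 'v set set \<Rightarrow> ('v \<Rightarrow> complex) \<Rightarrow> ('v set \<Rightarrow> real \<Rightarrow> complex) \<Rightarrow> bool" where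
  "plane_embedding V E pos \<gamma> \<longleftrightarrow> inj_on pos V \<and>
     (\<forall>e\<in>E. arc (\<gamma> e) \<and>
        (\<exists>u v. e = {u, v} \<and> pathstart (\<gamma> e) = pos u \<and> pathfinish (\<gamma> e) = pos v) \<and>
        path_image (\<gamma> e) \<inter> pos ` V = pos ` e) \<and>
     (\<forall>e\<in>E. \<forall>e'\<in>E. e \<noteq> e' \<longrightarrow> path_image (\<gamma> e) \<inter> path_image (\<gamma> e') \<subseteq> pos ` (e \<inter> e'))"

definition drawing :: "'v set \<Rightarrow> 'v set set \<Rightarrow> ('v \<Rightarrow> complex) \<Rightarrow> ('v set \<Rightarrow> real \<Rightarrow> complex) \<Rightarrow> complex set" where
  "drawing V E pos \<gamma> = pos ` V \<union> (\<Union>e\<in>E. path_image (\<gamma> e))"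

definition faces :: "'v set \<Rightarrow> 'v set set \<Rightarrow> ('v \<Rightarrow> complex) \<Rightarrow> ('v set \<Rightarrow> real \<Rightarrow> complex) \<Rightarrow> complex set set" where
  "faces V E pos \<gamma> = components (UNIV - drawing V E pos \<gamma>)"

definition boundary_edges :: "'v set set \<Rightarrow> ('v set \<Rightarrow> real \<Rightarrow> complex) \<Rightarrow> complex set \<Rightarrow> 'v set set" where
  "boundary_edges E \<gamma> f = {e\<in>E. path_image (\<gamma> e) \<subseteq> frontier f}"

definition face_colors :: "'v set set \<Rightarrow> ('v set \<Rightarrow> real \<Rightarrow> complex) \<Rightarrow> ('v \<Rightarrow> nat set) \<Rightarrow> complex set \<Rightarrow> nat set" where
  "face_colors E \<gamma> \<sigma> f = (\<Union>e\<in>boundary_edges E \<gamma> f. \<Union>v\<in>e. \<sigma> v)"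

definition cig_edge ::
    "'v set \<Rightarrow> 'v set set \<Rightarrow> nat \<Rightarrow> ('v \<Rightarrow> complex) \<Rightarrow> ('v set \<Rightarrow> real \<Rightarrow> complex) \<Rightarrow> ('v \<Rightarrow> nat set) \<Rightarrow> nat \<Rightarrow> nat \<Rightarrow> bool" where
  "cig_edge V E m pos \<gamma> \<sigma> i j \<longleftrightarrow> i \<in> {1..m} \<and> j \<in> {1..m} \<and> i \<noteq> j \<and>
     (\<exists>f\<in>faces V E pos \<gamma>. {i, j} \<subseteq> face_colors E \<gamma> \<sigma> f)"

definition cig_induces_connected ::
    "'v set \<Rightarrow> 'v set set \<Rightarrow> nat \<Rightarrow> ('v \<Rightarrow> complex) \<Rightarrow> ('v set \<Rightarrow> real \<Rightarrow> complex) \<Rightarrow> ('v \<Rightarrow> nat set) \<Rightarrow> nat set \<Rightarrow> bool" where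
  "cig_induces_connected V E m pos \<gamma> \<sigma> C \<longleftrightarrow>
     (\<forall>i\<in>C. \<forall>j\<in>C. (i, j) \<in> {(a, b). cig_edge V E m pos \<gamma> \<sigma> a b \<and> a \<in> C \<and> b \<in> C}\<^sup>*)"

end

theory Submission
  imports Defs
begin


lemma core_top:
  fixes f W S T :: "complex set" and p :: complex
  assumes "open f" "connected f" "frontier f \<subseteq> S \<union> T" "f \<inter> (S \<union> T) = {}"
    "W \<inter> f = {}" "W \<inter> (S \<union> T) = {}"
    "p \<in> closure f" "p \<in> closure W" "compact S" "connected (-S)" "closed T"
    "connected (S \<inter> T)" "p \<notin> T"
  shows False
proof -
  obtain \<rho> where \<rho>: "\<rho> > 0" "ball p \<rho> \<subseteq> -T"
    using assms(11,13) open_contains_ball by (metis ComplI open_Compl)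
  obtain z where z: "z \<in> f" "dist p z < \<rho>" using closure_approachableD assms(7) \<rho>(1) by blast
  obtain w where w: "w \<in> W" "dist p w < \<rho>" using closure_approachableD assms(8) \<rho>(1) by blast
  have zS: "z \<notin> S \<union> T" "w \<notin> S \<union> T" using z w assms(4,6) by auto
  have "connected_component (-S) z w"
    unfolding connected_component_def using assms(10) zS by blast
  moreover have "connected_component (-T) z w"
    unfolding connected_component_def
    by (rule exI[of _ "ball p \<rho>"]) (use \<rho> z w in auto)
  ultimately have "connected_component (-(S \<union> T)) z w"
    using Janiszewski[OF assms(9) assms(11) assms(12)] by blast
  then obtain C where C: "connected C" "C \<subseteq> -(S \<union> T)" "z \<in> C" "w \<in> C"
    unfolding connected_component_def by blast
  have "C \<inter> frontier f = {}" using C(2) assms(3) by blast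
  moreover have "w \<notin> f" using w assms(5) by blast
  ultimately show False
    using connected_Int_frontier[OF C(1), of f] C z w by blast
qed

lemma closed_comp_family:
  fixes L K :: "complex set" and F :: "complex set set"
  assumes "closed L" "closed K" "F \<subseteq> components (-L)"
    "\<And>Cm. Cm \<in> F \<Longrightarrow> frontier Cm \<subseteq> K"
  shows "closed ((K \<inter> L) \<union> \<Union>F)"
proof -
  have opF: "open (\<Union>F)"
    using assms(1,3) open_components by (metis open_Compl open_Union subsetD)
  have "frontier (\<Union>F) \<subseteq> closure (\<Union>Cm\<in>F. frontier Cm)"
    by (rule frontier_Union_subset_closure)
  also have "\<dots> \<subseteq> K" using assms(2,4) by (simp add: SUP_least closure_minimal)
  finally have frK: "frontier (\<Union>F) \<subseteq> K" .
  have frL: "frontier (\<Union>F) \<subseteq> L"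
  proof
    fix y assume y: "y \<in> frontier (\<Union>F)"
    show "y \<in> L"
    proof (rule ccontr)
      assume "y \<notin> L"
      then obtain Cn where Cn: "Cn \<in> components (-L)" "y \<in> Cn"
        by (metis ComplI Union_components UnionE)
      have "open Cn" using Cn assms(1) open_components by blast
      have "y \<in> closure (\<Union>F)" using y frontier_def by auto
      then have "Cn \<inter> \<Union>F \<noteq> {}"
        using \<open>open Cn\<close> Cn(2) open_Int_closure_eq_empty by blast
      then obtain Cm where Cm: "Cm \<in> F" "Cn \<inter> Cm \<noteq> {}" by blast
      have "Cn = Cm" using Cm Cn assms(3) components_nonoverlap by blast
      then have "y \<in> \<Union>F" using Cm Cn by blast
      then show False using y opF by (simp add: frontier_def interior_open)
    qed
  qed
  have "closure (\<Union>F) \<subseteq> \<Union>F \<union> (K \<inter> L)"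
    using frK frL closure_Un_frontier by blast
  then have "closure ((K \<inter> L) \<union> \<Union>F) \<subseteq> (K \<inter> L) \<union> \<Union>F"
  proof -
    have "closure (K \<inter> L) = K \<inter> L" using assms(1,2) by (simp add: closed_Int)
    then show ?thesis using \<open>closure (\<Union>F) \<subseteq> \<Union>F \<union> (K \<inter> L)\<close> unfolding closure_Un by blast
  qed
  then show ?thesis using closure_subset_eq by blast
qed

lemma open_PB:
  fixes OA OB T0 U0 P Q :: "complex set"
  assumes oA: "open OA" and oB: "open OB" and dAB: "OA \<inter> OB = {}"
    and cT: "closed T0" and cU: "closed U0" and dTU: "T0 \<inter> U0 = {}"
    and Z: "-(OA \<union> OB) \<subseteq> T0 \<union> U0"
    and P: "connected P" "P \<inter> OA = {}" "a \<in> P" "b \<in> P"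
    and Q: "connected Q" "Q \<inter> OB = {}" "a \<in> Q" "b \<in> Q"
    and a: "a \<in> T0" and b: "b \<in> U0"
  shows False
proof -
  define X where "X = -OA"
  define L where "L = connected_component_set X a"
  have cX: "closed X" using oA X_def by auto
  have aX: "a \<in> X" using P unfolding X_def by auto
  have closedL: "closed L" unfolding L_def using closed_connected_component cX by blast
  have connL: "connected L" unfolding L_def by simp
  have PL: "P \<subseteq> L" unfolding L_def
    by (rule connected_component_maximal) (use P X_def in auto)
  have LX: "L \<subseteq> X" unfolding L_def by (rule connected_component_subset)
  have frL: "frontier L \<subseteq> -(OA \<union> OB)"
  proof
    fix x assume x: "x \<in> frontier L"
    then have xL: "x \<in> L" using closedL frontier_subset_closed by blast
    then have "x \<notin> OA" using LX X_def by auto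
    moreover have "x \<notin> OB"
    proof
      assume "x \<in> OB"
      then obtain r where r: "r > 0" "ball x r \<subseteq> OB" using oB open_contains_ball by blast
      have "ball x r \<subseteq> X" using r dAB X_def by auto
      have "connected (L \<union> ball x r)"
        using connL r(1) xL by (intro connected_Un) auto
      moreover have "L \<union> ball x r \<subseteq> X" using LX \<open>ball x r \<subseteq> X\<close> by blast
      moreover have "a \<in> L \<union> ball x r" using PL P by blast
      ultimately have "L \<union> ball x r \<subseteq> L" unfolding L_def
        by (metis connected_component_maximal)
      then have "ball x r \<subseteq> L" by blast
      then have "x \<in> interior L" using r(1) by (meson interior_maximal open_ball centre_in_ball subsetD)
      then show False using x by (simp add: frontier_def)
    qed
    ultimately show "x \<in> -(OA \<union> OB)" by blast
  qed
  have key: "frontier Cm \<subseteq> T0 \<or> frontier Cm \<subseteq> U0" if Cm: "Cm \<in> components (-L)" for Cm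
  proof -
    have "frontier Cm \<subseteq> L"
      using frontier_of_components_closed_complement closedL Cm by blast
    moreover have "frontier Cm \<subseteq> closure (-L)"
      using Cm in_components_subset frontier_def closure_mono by (metis Diff_subset subset_trans)
    ultimately have "frontier Cm \<subseteq> frontier L"
      using closedL by (auto simp: frontier_def interior_closure)
    then have fz: "frontier Cm \<subseteq> T0 \<union> U0" using frL Z by blast
    have "connected (frontier Cm)"
      using connected_frontier_component_complement connL Cm by blast
    then show ?thesis using fz cT cU dTU unfolding connected_closed by blast
  qed
  define FT where "FT = {Cm \<in> components (-L). frontier Cm \<subseteq> T0}"
  define FU where "FU = {Cm \<in> components (-L). \<not> frontier Cm \<subseteq> T0}"
  define MT where "MT = (T0 \<inter> L) \<union> \<Union>FT"
  define MU where "MU = (U0 \<inter> L) \<union> \<Union>FU"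
  have clMT: "closed MT" unfolding MT_def
    by (rule closed_comp_family[OF closedL cT]) (auto simp: FT_def)
  have clMU: "closed MU" unfolding MU_def
    by (rule closed_comp_family[OF closedL cU]) (use key in \<open>auto simp: FU_def\<close>)
  have QM: "Q \<subseteq> MT \<union> MU"
  proof
    fix q assume q: "q \<in> Q"
    show "q \<in> MT \<union> MU"
    proof (cases "q \<in> L")
      case True
      then have "q \<notin> OA" using LX X_def by auto
      moreover have "q \<notin> OB" using q Q by auto
      ultimately have "q \<in> T0 \<union> U0" using Z by blast
      then show ?thesis using True MT_def MU_def by blast
    next
      case False
      then obtain Cm where "Cm \<in> components (-L)" "q \<in> Cm"
        by (metis ComplI Union_components UnionE)
      then show ?thesis unfolding MT_def MU_def FT_def FU_def by blast
    qed
  qed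
  have disj: "MT \<inter> MU = {}"
  proof -
    have "Cm \<inter> L = {}" if "Cm \<in> components (-L)" for Cm
      using that in_components_subset by blast
    moreover have "C1 \<inter> C2 = {}" if "C1 \<in> FT" "C2 \<in> FU" for C1 C2
      using that components_nonoverlap unfolding FT_def FU_def by blast
    ultimately show ?thesis unfolding MT_def MU_def FT_def FU_def using dTU by blast
  qed
  have "a \<in> MT" using a PL P MT_def by blast
  moreover have "b \<in> MU" using b PL P MU_def by blast
  ultimately show False
    using Q(1) QM disj clMT clMU Q(3,4) unfolding connected_closed by blast
qed

lemma arc_inj: "arc g \<Longrightarrow> x \<in> {0..1} \<Longrightarrow> y \<in> {0..1} \<Longrightarrow> g x = g y \<Longrightarrow> x = y"
  using arcD by blast

lemma arc_side:
  fixes g :: "real \<Rightarrow> complex"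
  assumes g: "arc g" and R: "closed R" and gR: "g ` {0<..<1} \<inter> R = {}"
    and f: "f \<in> components (-(R \<union> path_image g))"
    and a: "0 < a" "a < 1" "g a \<in> closure f" and t0: "a \<le> t0" "t0 \<le> 1"
  shows "g t0 \<in> closure f"
proof (rule ccontr)
  assume nt0: "g t0 \<notin> closure f"
  have contg: "continuous_on {0..1} g" using g arc_imp_path path_def by blast
  define T where "T = {0..1} \<inter> g -` closure f"
  have clT: "closed T" unfolding T_def
    by (rule continuous_closed_preimage[OF contg]) auto
  define M where "M = T \<inter> {a..t0}"
  have clM: "closed M" using clT M_def by auto
  have aM: "a \<in> M" using a t0 T_def M_def by auto
  have bM: "bdd_above M" unfolding M_def by auto
  define c where "c = Sup M"
  have cM: "c \<in> M" unfolding c_def using closed_contains_Sup[OF _ bM clM] aM by blast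
  have ac: "a \<le> c" unfolding c_def using aM bM by (simp add: cSup_upper)
  have ct0: "c < t0"
  proof -
    have "c \<le> t0" using cM M_def by auto
    moreover have "c \<noteq> t0" using cM nt0 M_def T_def by auto
    ultimately show ?thesis by auto
  qed
  have notT: "g t \<notin> closure f" if "c < t" "t \<le> t0" for t
  proof
    assume "g t \<in> closure f"
    then have "t \<in> M" using that ac a t0 unfolding M_def T_def by auto
    then have "t \<le> c" unfolding c_def using bM by (simp add: cSup_upper)
    then show False using that by auto
  qed
  have c01: "0 < c" "c < 1" using ac a ct0 t0 by auto
  define \<epsilon> where "\<epsilon> = c / 2"
  have eps: "0 < \<epsilon>" "\<epsilon> < c" using c01 \<epsilon>_def by auto
  define S where "S = g ` {c - \<epsilon>..c}"
  define T' where "T' = R \<union> g ` {0..c - \<epsilon>} \<union> g ` {t0..1}"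
  define W where "W = g ` {c<..<t0}"
  define D where "D = R \<union> path_image g"
  have clD: "closed D" unfolding D_def using R g closed_arc_image by blast
  have injg: "x = y" if "g x = g y" "x \<in> {0..1}" "y \<in> {0..1}" for x y
    using arc_inj[OF g] that by blast
  have fD: "f \<subseteq> -D" using f in_components_subset D_def by blast
  have opf: "open f" using f clD D_def open_components by (metis open_Compl)
  have conf: "connected f" using f in_components_connected by blast
  have frD: "frontier f \<subseteq> D"
    using frontier_of_components_closed_complement clD f D_def by blast
  have pi: "path_image g = g ` {0..1}" by (simp add: path_image_def)
  have split: "{0..1} = {0..c-\<epsilon>} \<union> {c-\<epsilon>..c} \<union> {c<..<t0} \<union> {t0..1::real}"
    using eps c01 ct0 t0 by auto
  have DST: "D \<subseteq> S \<union> T' \<union> W"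
    unfolding D_def S_def T'_def W_def pi by (subst split) auto
  have frST: "frontier f \<subseteq> S \<union> T'"
  proof
    fix y assume y: "y \<in> frontier f"
    then have "y \<in> closure f" by (simp add: frontier_def)
    moreover have "y \<notin> W"
    proof
      assume "y \<in> W"
      then obtain t where "t \<in> {c<..<t0}" "y = g t" unfolding W_def by blast
      then show False using notT \<open>y \<in> closure f\<close> by auto
    qed
    ultimately show "y \<in> S \<union> T'" using y frD DST by blast
  qed
  have STD: "S \<union> T' \<subseteq> D" unfolding S_def T'_def D_def pi using eps c01 ct0 t0 by auto
  have WD: "W \<subseteq> D" unfolding W_def D_def pi using eps c01 ct0 t0 by auto
  have Wint: "W \<subseteq> g ` {0<..<1}" unfolding W_def using c01 t0 by auto
  have WST: "W \<inter> (S \<union> T') = {}"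
  proof -
    have "W \<inter> R = {}" using Wint gR by blast
    moreover have "W \<inter> g ` ({0..c-\<epsilon>} \<union> {c-\<epsilon>..c} \<union> {t0..1}) = {}"
    proof -
      { fix x y assume x: "x \<in> {c<..<t0}" and y: "y \<in> {0..c-\<epsilon>} \<union> {c-\<epsilon>..c} \<union> {t0..1}" and "g x = g y"
        then have "x = y" using injg[of x y] c01 t0 eps ct0 by auto
        then have False using x y eps by auto }
      then show ?thesis unfolding W_def by blast
    qed
    ultimately show ?thesis unfolding S_def T'_def by blast
  qed
  have pf: "g c \<in> closure f" using cM M_def T_def by auto
  have pW: "g c \<in> closure W"
  proof -
    have "g ` closure {c<..<t0} \<subseteq> closure W"
    proof (rule image_closure_subset)
      show "continuous_on (closure {c<..<t0}) g"
        using ct0 c01 t0 by (auto intro: continuous_on_subset[OF contg])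
      show "g ` {c<..<t0} \<subseteq> closure W" unfolding W_def by (rule closure_subset)
    qed simp
    moreover have "c \<in> closure {c<..<t0}" using ct0 by simp
    ultimately show ?thesis by blast
  qed
  have Ssub: "S = path_image (subpath (c-\<epsilon>) c g)"
    unfolding S_def using eps by (simp add: path_image_subpath)
  have arcS: "arc (subpath (c-\<epsilon>) c g)"
    by (rule arc_subpath_arc[OF g]) (use eps c01 in auto)
  have compS: "compact S" using Ssub arcS compact_arc_image by metis
  have connS: "connected (-S)" using Ssub arcS connected_arc_complement by (metis DIM_complex order_refl)
  have clT': "closed T'" unfolding T'_def
  proof (intro closed_Un R compact_imp_closed)
    show "compact (g ` {0..c - \<epsilon>})"
      by (rule compact_continuous_image) (use contg eps c01 in \<open>auto intro: continuous_on_subset\<close>)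
    show "compact (g ` {t0..1})"
      by (rule compact_continuous_image) (use contg a t0 in \<open>auto intro: continuous_on_subset\<close>)
  qed
  have STsing: "S \<inter> T' = {g (c - \<epsilon>)}"
  proof
    show "{g (c - \<epsilon>)} \<subseteq> S \<inter> T'" unfolding S_def T'_def using eps by auto
    have "{c - \<epsilon>..c} \<subseteq> {0<..<1}" using eps c01 by auto
    then have "S \<inter> R = {}" unfolding S_def using gR by blast
    moreover have "x = c - \<epsilon>" if "x \<in> {c-\<epsilon>..c}" "y \<in> {0..c-\<epsilon>} \<union> {t0..1}" "g x = g y" for x y
    proof -
      have "x = y" using injg[of x y] that eps c01 t0 a by auto
      then show ?thesis using that ct0 by auto
    qed
    ultimately show "S \<inter> T' \<subseteq> {g (c - \<epsilon>)}" unfolding S_def T'_def by fastforce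
  qed
  have pT: "g c \<notin> T'"
  proof -
    have "g c \<in> g ` {0<..<1}" using c01 by auto
    then have "g c \<notin> R" using gR by blast
    moreover have "c = y" if "y \<in> {0..c-\<epsilon>} \<union> {t0..1}" "g c = g y" for y
      using injg[of c y] that eps c01 t0 a by auto
    ultimately show ?thesis unfolding T'_def using eps ct0 by fastforce
  qed
  show False
    by (rule core_top[OF opf conf frST _ _ WST pf pW compS connS clT' _ pT])
       (use fD STD WD STsing in auto)
qed

lemma arc_full:
  fixes g :: "real \<Rightarrow> complex"
  assumes g: "arc g" and R: "closed R" and gR: "g ` {0<..<1} \<inter> R = {}"
    and f: "f \<in> components (-(R \<union> path_image g))"
    and a: "0 < a" "a < 1" "g a \<in> closure f"
  shows "path_image g \<subseteq> closure f"
proof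
  fix y assume "y \<in> path_image g"
  then obtain t where t: "t \<in> {0..1}" "y = g t" by (auto simp: path_image_def)
  show "y \<in> closure f"
  proof (cases "a \<le> t")
    case True
    then show ?thesis using arc_side[OF g R gR f a True] t by auto
  next
    case False
    have g': "arc (reversepath g)" using g by (simp add: arc_reversepath)
    have gR': "reversepath g ` {0<..<1} \<inter> R = {}"
    proof -
      have "reversepath g ` {0<..<1} \<subseteq> g ` {0<..<1}"
        by (auto simp: reversepath_def image_iff intro!: bexI[where x="1 - _"])
      then show ?thesis using gR by blast
    qed
    have f': "f \<in> components (-(R \<union> path_image (reversepath g)))"
      using f by (simp add: path_image_reversepath)
    have "reversepath g (1 - t) \<in> closure f"
      by (rule arc_side[OF g' R gR' f', of "1 - a"]) (use a False t in \<open>auto simp: reversepath_def\<close>)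
    then show ?thesis using t by (simp add: reversepath_def)
  qed
qed



locale pgraph =
  fixes V :: "'v set" and E :: "'v set set" and pos :: "'v \<Rightarrow> complex"
    and \<gamma> :: "'v set \<Rightarrow> real \<Rightarrow> complex"
  assumes sg: "simple_graph V E" and pe: "plane_embedding V E pos \<gamma>"
begin

abbreviation "DD \<equiv> drawing V E pos \<gamma>"

lemma finV: "finite V" using sg unfolding simple_graph_def by (elim conjE)

lemma pe2: "\<forall>e\<in>E. arc (\<gamma> e) \<and>
        (\<exists>u v. e = {u, v} \<and> pathstart (\<gamma> e) = pos u \<and> pathfinish (\<gamma> e) = pos v) \<and>
        path_image (\<gamma> e) \<inter> pos ` V = pos ` e"
  using pe unfolding plane_embedding_def by (elim conjE)
lemma pe3: "\<forall>e\<in>E. \<forall>e'\<in>E. e \<noteq> e' \<longrightarrow> path_image (\<gamma> e) \<inter> path_image (\<gamma> e') \<subseteq> pos ` (e \<inter> e')"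
  using pe unfolding plane_embedding_def by (elim conjE)
lemma sg2: "\<forall>e\<in>E. \<exists>u v. u \<in> V \<and> v \<in> V \<and> u \<noteq> v \<and> e = {u, v}"
  using sg unfolding simple_graph_def by (elim conjE)

lemma eV: assumes "e \<in> E" shows "e \<subseteq> V"
proof -
  obtain u v where "u \<in> V" "v \<in> V" "e = {u, v}" using sg2 assms by meson
  then show ?thesis by simp
qed

lemma finE: "finite E"
proof -
  have "E \<subseteq> Pow V" using eV by blast
  then show ?thesis using finV by (meson finite_Pow_iff finite_subset)
qed

lemma injpos: "inj_on pos V" using pe unfolding plane_embedding_def by (elim conjE)

lemma arcE: "e \<in> E \<Longrightarrow> arc (\<gamma> e)" using pe2 by simp

lemma imgV: "e \<in> E \<Longrightarrow> path_image (\<gamma> e) \<inter> pos ` V = pos ` e"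
  using pe2 by simp

lemma cross: "e \<in> E \<Longrightarrow> e' \<in> E \<Longrightarrow> e \<noteq> e' \<Longrightarrow> path_image (\<gamma> e) \<inter> path_image (\<gamma> e') \<subseteq> pos ` (e \<inter> e')"
  using pe3 by simp

lemma edge:
  assumes e: "e \<in> E"
  obtains u v where "u \<in> V" "v \<in> V" "u \<noteq> v" "e = {u, v}" "\<gamma> e 0 = pos u" "\<gamma> e 1 = pos v"
proof -
  obtain u v where uv: "e = {u, v}" "pathstart (\<gamma> e) = pos u" "pathfinish (\<gamma> e) = pos v"
    using pe2 e by meson
  obtain u' v' where uv': "u' \<in> V" "v' \<in> V" "u' \<noteq> v'" "e = {u', v'}"
    using sg2 e by meson
  have "u \<in> V" "v \<in> V" "u \<noteq> v" using uv uv' by (metis doubleton_eq_iff)+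
  then show ?thesis using that uv by (simp add: pathstart_def pathfinish_def)
qed

lemma int_notV:
  assumes "e \<in> E" "0 < t" "t < 1"
  shows "\<gamma> e t \<notin> pos ` V"
proof
  assume a: "\<gamma> e t \<in> pos ` V"
  obtain u v where uv: "u \<in> V" "v \<in> V" "u \<noteq> v" "e = {u, v}" "\<gamma> e 0 = pos u" "\<gamma> e 1 = pos v"
    by (rule edge[OF assms(1)])
  have "\<gamma> e t \<in> path_image (\<gamma> e)" using assms by (auto simp: path_image_def)
  then have "\<gamma> e t \<in> pos ` e" using a imgV assms(1) by blast
  then have "\<gamma> e t = \<gamma> e 0 \<or> \<gamma> e t = \<gamma> e 1" using uv by auto
  moreover have "t \<in> {0..1}" using assms by auto
  ultimately have "t = 0 \<or> t = 1" using arc_inj[OF arcE[OF assms(1)], of t 0] arc_inj[OF arcE[OF assms(1)], of t 1] by auto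
  then show False using assms by auto
qed

lemma int_notE:
  assumes "e \<in> E" "e' \<in> E" "e \<noteq> e'" "0 < t" "t < 1"
  shows "\<gamma> e t \<notin> path_image (\<gamma> e')"
proof
  assume "\<gamma> e t \<in> path_image (\<gamma> e')"
  moreover have "\<gamma> e t \<in> path_image (\<gamma> e)" using assms by (auto simp: path_image_def)
  ultimately have "\<gamma> e t \<in> pos ` (e \<inter> e')" using cross assms by blast
  then have "\<gamma> e t \<in> pos ` V" using eV assms by blast
  then show False using int_notV assms by blast
qed

definition Rest :: "'v set \<Rightarrow> complex set" where
  "Rest e = pos ` V \<union> (\<Union>e'\<in>E - {e}. path_image (\<gamma> e'))"

lemma compact_pi: "e \<in> E \<Longrightarrow> compact (path_image (\<gamma> e))"
  using arcE compact_arc_image by blast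

lemma closed_Rest: "closed (Rest e)"
  unfolding Rest_def
  using finV finE compact_pi
  by (intro closed_Un finite_imp_closed closed_UN) (auto intro: compact_imp_closed)

lemma closed_D: "closed DD"
  unfolding drawing_def
  using finV finE compact_pi
  by (intro closed_Un finite_imp_closed closed_UN) (auto intro: compact_imp_closed)

lemma D_Rest: "e \<in> E \<Longrightarrow> DD = Rest e \<union> path_image (\<gamma> e)"
  unfolding drawing_def Rest_def by blast

lemma int_Rest: "e \<in> E \<Longrightarrow> \<gamma> e ` {0<..<1} \<inter> Rest e = {}"
  unfolding Rest_def using int_notV int_notE by fastforce

lemma faces_eq: "faces V E pos \<gamma> = components (-DD)"
  by (simp add: faces_def Compl_eq_Diff_UNIV)

lemma face_open: "f \<in> components (-DD) \<Longrightarrow> open f"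
  using closed_D open_components by (metis open_Compl)

lemma face_sub: "f \<in> components (-DD) \<Longrightarrow> f \<subseteq> -DD"
  using in_components_subset by blast

lemma pi_D: "e \<in> E \<Longrightarrow> path_image (\<gamma> e) \<subseteq> DD"
  unfolding drawing_def by blast

lemma face_arc:
  assumes f: "f \<in> components (-DD)" and e: "e \<in> E" and a: "0 < a" "a < 1" "\<gamma> e a \<in> closure f"
  shows "e \<in> boundary_edges E \<gamma> f"
proof -
  have f': "f \<in> components (-(Rest e \<union> path_image (\<gamma> e)))" using f D_Rest e by simp
  have "path_image (\<gamma> e) \<subseteq> closure f"
    by (rule arc_full[OF arcE[OF e] closed_Rest int_Rest[OF e] f' a])
  moreover have "path_image (\<gamma> e) \<inter> f = {}" using face_sub[OF f] pi_D[OF e] by blast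
  ultimately have "path_image (\<gamma> e) \<subseteq> frontier f"
    using face_open[OF f] by (auto simp: frontier_def interior_open)
  then show ?thesis using e unfolding boundary_edges_def by blast
qed

lemma ball_arc:
  assumes e: "e \<in> E" and a: "0 < a" "a < 1"
  obtains r where "r > 0" "ball (\<gamma> e a) r \<inter> DD \<subseteq> \<gamma> e ` {0<..<1}"
proof -
  have "\<gamma> e a \<in> \<gamma> e ` {0<..<1}" using a by auto
  then have "\<gamma> e a \<in> -Rest e" using int_Rest[OF e] by blast
  moreover have "open (-Rest e)" using closed_Rest by auto
  ultimately obtain r where r: "r > 0" "ball (\<gamma> e a) r \<subseteq> -Rest e"
    using open_contains_ball by blast
  obtain u v where uv: "u \<in> V" "v \<in> V" "u \<noteq> v" "e = {u, v}" "\<gamma> e 0 = pos u" "\<gamma> e 1 = pos v"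
    by (rule edge[OF e])
  have DDsub: "DD \<subseteq> Rest e \<union> \<gamma> e ` {0<..<1}"
  proof
    fix x assume "x \<in> DD"
    then have "x \<in> Rest e \<or> x \<in> path_image (\<gamma> e)" using D_Rest[OF e] by simp
    moreover
    { assume "x \<in> path_image (\<gamma> e)"
      then obtain t where t: "t \<in> {0..1}" "x = \<gamma> e t" by (auto simp: path_image_def)
      have "x \<in> Rest e \<union> \<gamma> e ` {0<..<1}"
      proof (cases "t = 0 \<or> t = 1")
        case True
        then have "x = pos u \<or> x = pos v" using uv t by auto
        then have "x \<in> pos ` V" using uv by auto
        then show ?thesis unfolding Rest_def by blast
      next
        case False
        then have "t \<in> {0<..<1}" using t by auto
        then show ?thesis using t(2) by blast
      qed }
    ultimately show "x \<in> Rest e \<union> \<gamma> e ` {0<..<1}" by blast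
  qed
  have "ball (\<gamma> e a) r \<inter> DD \<subseteq> \<gamma> e ` {0<..<1}" using r(2) DDsub by blast
  then show ?thesis by (rule that[OF r(1)])
qed

lemma ball_vertex:
  assumes v: "v \<in> V"
  obtains r where "r > 0" "ball (pos v) r \<inter> DD \<subseteq> insert (pos v) (\<Union>e\<in>{e\<in>E. v \<in> e}. \<gamma> e ` {0<..<1})"
proof -
  define Rv where "Rv = pos ` (V - {v}) \<union> (\<Union>e\<in>{e\<in>E. v \<notin> e}. path_image (\<gamma> e))"
  have clRv: "closed Rv" unfolding Rv_def
  proof (intro closed_Un closed_UN)
    show "closed (pos ` (V - {v}))" using finV by (simp add: finite_imp_closed)
    show "finite {e \<in> E. v \<notin> e}" using finE by simp
    show "\<forall>e\<in>{e \<in> E. v \<notin> e}. closed (path_image (\<gamma> e))" using compact_pi compact_imp_closed by blast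
  qed
  have "pos v \<notin> Rv"
  proof
    assume "pos v \<in> Rv"
    then consider "pos v \<in> pos ` (V - {v})" | e where "e \<in> E" "v \<notin> e" "pos v \<in> path_image (\<gamma> e)"
      unfolding Rv_def by blast
    then show False
    proof cases
      case 1 then show False using injpos v by (auto simp: inj_on_def)
    next
      case 2
      then have "pos v \<in> pos ` e" using imgV v by blast
      then show False using 2 injpos v eV[OF 2(1)] by (auto simp: inj_on_def)
    qed
  qed
  then have "pos v \<in> -Rv" by simp
  moreover have "open (-Rv)" using clRv by auto
  ultimately obtain r where r: "r > 0" "ball (pos v) r \<subseteq> -Rv"
    using open_contains_ball by blast
  have vpts: "y \<in> Rv \<or> y = pos v" if y: "y \<in> pos ` V" for y
  proof -
    obtain w where w: "w \<in> V" "y = pos w" using y by blast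
    show ?thesis
    proof (cases "w = v")
      case True then show ?thesis using w by simp
    next
      case False then have "y \<in> pos ` (V - {v})" using w by blast
      then show ?thesis unfolding Rv_def by blast
    qed
  qed
  have "DD \<subseteq> Rv \<union> insert (pos v) (\<Union>e\<in>{e\<in>E. v \<in> e}. \<gamma> e ` {0<..<1})"
  proof
    fix x assume x: "x \<in> DD"
    show "x \<in> Rv \<union> insert (pos v) (\<Union>e\<in>{e\<in>E. v \<in> e}. \<gamma> e ` {0<..<1})"
    proof (cases "x \<in> pos ` V")
      case True then show ?thesis using vpts by blast
    next
      case False
      then obtain e where e: "e \<in> E" "x \<in> path_image (\<gamma> e)" using x unfolding drawing_def by blast
      show ?thesis
      proof (cases "v \<in> e")
        case False
        then have "x \<in> Rv" unfolding Rv_def using e by blast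
        then show ?thesis by blast
      next
        case True
        obtain t where t: "t \<in> {0..1}" "x = \<gamma> e t" using e(2) unfolding path_image_def by blast
        obtain u w where uw: "u \<in> V" "w \<in> V" "u \<noteq> w" "e = {u, w}" "\<gamma> e 0 = pos u" "\<gamma> e 1 = pos w" by (rule edge[OF e(1)])
        show ?thesis
        proof (cases "t = 0 \<or> t = 1")
          case True
          then have "x = pos u \<or> x = pos w" using uw t by auto
          then have "x \<in> pos ` V" using uw by blast
          then show ?thesis using vpts by blast
        next
          case False
          then have "t \<in> {0<..<1}" using t by auto
          then have "x \<in> \<gamma> e ` {0<..<1}" using t(2) by blast
          then show ?thesis using True e(1) by blast
        qed
      qed
    qed
  qed
  then have "ball (pos v) r \<inter> DD \<subseteq> insert (pos v) (\<Union>e\<in>{e\<in>E. v \<in> e}. \<gamma> e ` {0<..<1})"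
    using r(2) by blast
  then show ?thesis by (rule that[OF r(1)])
qed

lemma ball_frontier:
  assumes f: "f \<in> components (-DD)" and z: "z \<in> f" "z \<in> ball c r" and q: "q \<in> DD" "q \<in> ball c r"
  obtains q' where "q' \<in> ball c r" "q' \<in> DD" "q' \<in> closure f"
proof -
  have "ball c r \<inter> f \<noteq> {}" using z by blast
  moreover have "ball c r - f \<noteq> {}" using q face_sub[OF f] by blast
  ultimately obtain q' where "q' \<in> ball c r" "q' \<in> frontier f"
    using connected_Int_frontier[of "ball c r" f] by blast
  moreover have "frontier f \<subseteq> DD"
    using frontier_of_components_closed_complement closed_D f by blast
  ultimately show ?thesis using that by (auto simp: frontier_def)
qed

lemma comp_of:
  assumes "z \<notin> DD"
  shows "connected_component_set (-DD) z \<in> components (-DD)" "z \<in> connected_component_set (-DD) z"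
  using assms by (auto simp: componentsI)

lemma face_vertex:
  assumes f: "f \<in> components (-DD)" and v: "v \<in> V" and e0: "e0 \<in> E" "v \<in> e0"
    and cl: "pos v \<in> closure f"
  shows "\<exists>e\<in>E. v \<in> e \<and> e \<in> boundary_edges E \<gamma> f"
proof -
  obtain r where r: "r > 0" "ball (pos v) r \<inter> DD \<subseteq> insert (pos v) (\<Union>e\<in>{e\<in>E. v \<in> e}. \<gamma> e ` {0<..<1})"
    by (rule ball_vertex[OF v])
  define B where "B = ball (pos v) r - {pos v}"
  have cB: "connected B" unfolding B_def by (rule connected_punctured_ball) simp
  have pvD: "pos v \<in> DD" using v unfolding drawing_def by blast
  obtain z where z: "z \<in> f" "dist (pos v) z < r" using closure_approachableD[OF cl r(1)] by blast
  have "z \<noteq> pos v" using z pvD face_sub[OF f] by blast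
  then have zB: "z \<in> B" using z unfolding B_def by simp
  obtain u w where uw: "u \<in> V" "w \<in> V" "u \<noteq> w" "e0 = {u, w}" "\<gamma> e0 0 = pos u" "\<gamma> e0 1 = pos w"
    by (rule edge[OF e0(1)])
  have contg: "continuous_on {0..1} (\<gamma> e0)" using arcE[OF e0(1)] arc_imp_path path_def by blast
  have "\<exists>t. 0 < t \<and> t < 1 \<and> dist (\<gamma> e0 t) (pos v) < r"
  proof (cases "v = u")
    case True
    obtain d where d: "d > 0" "\<forall>x'\<in>{0..1}. dist x' 0 < d \<longrightarrow> dist (\<gamma> e0 x') (\<gamma> e0 0) < r"
    proof -
      have "0 \<in> {0..1::real}" by simp
      then show ?thesis using that contg r(1) unfolding continuous_on_iff by blast
    qed
    define t where "t = min (d/2) (1/2)"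
    have t: "0 < t" "t < 1" "dist t 0 < d" using d t_def by auto
    then have "t \<in> {0..1}" by auto
    then have "dist (\<gamma> e0 t) (\<gamma> e0 0) < r" using d(2) t(3) by blast
    then have "dist (\<gamma> e0 t) (pos v) < r" using uw(5) True by simp
    then show ?thesis using t(1,2) by blast
  next
    case False
    then have vw: "v = w" using e0 uw by auto
    obtain d where d: "d > 0" "\<forall>x'\<in>{0..1}. dist x' 1 < d \<longrightarrow> dist (\<gamma> e0 x') (\<gamma> e0 1) < r"
    proof -
      have "1 \<in> {0..1::real}" by simp
      then show ?thesis using that contg r(1) unfolding continuous_on_iff by blast
    qed
    define t where "t = max (1 - d/2) (1/2)"
    have t: "0 < t" "t < 1" "dist t 1 < d" using d t_def by (auto simp: dist_real_def)
    then have "t \<in> {0..1}" by auto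
    then have "dist (\<gamma> e0 t) (\<gamma> e0 1) < r" using d(2) t(3) by blast
    then have "dist (\<gamma> e0 t) (pos v) < r" using uw(6) vw by simp
    then show ?thesis using t(1,2) by blast
  qed
  then obtain t where t: "0 < t" "t < 1" "dist (\<gamma> e0 t) (pos v) < r" by blast
  have "\<gamma> e0 t \<noteq> pos v" using int_notV[OF e0(1) t(1,2)] v by blast
  moreover have "\<gamma> e0 t \<in> DD" using pi_D[OF e0(1)] t by (auto simp: path_image_def)
  ultimately have "\<gamma> e0 t \<in> B" "\<gamma> e0 t \<notin> f"
    using t(3) face_sub[OF f] unfolding B_def by (auto simp: dist_commute)
  then have "B - f \<noteq> {}" by blast
  moreover have "B \<inter> f \<noteq> {}" using zB z by blast
  ultimately obtain q where q: "q \<in> B" "q \<in> frontier f"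
    using connected_Int_frontier[OF cB] by blast
  have "q \<in> DD" using q frontier_of_components_closed_complement closed_D f by blast
  then have "q \<in> (\<Union>e\<in>{e\<in>E. v \<in> e}. \<gamma> e ` {0<..<1})" using q(1) r(2) unfolding B_def by blast
  then obtain e a where ea: "e \<in> E" "v \<in> e" "0 < a" "a < 1" "q = \<gamma> e a" by auto
  have "q \<in> closure f" using q(2) by (simp add: frontier_def)
  then have "e \<in> boundary_edges E \<gamma> f" using face_arc[OF f ea(1,3,4)] ea by simp
  then show ?thesis using ea by blast
qed

lemma edge_face:
  assumes e: "e \<in> E"
  shows "\<exists>f\<in>components (-DD). e \<in> boundary_edges E \<gamma> f"
proof -
  define g where "g = \<gamma> e"
  define q where "q = g (1/2)"
  obtain r where r: "r > 0" "ball q r \<inter> DD \<subseteq> g ` {0<..<1}"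
    using ball_arc[OF e, of "1/2"] unfolding q_def g_def by auto
  have "\<exists>z\<in>ball q r. z \<notin> DD"
  proof (rule ccontr)
    assume "\<not> ?thesis"
    then have bsub: "ball q r \<subseteq> path_image g" using r(2) by (auto simp: path_image_def)
    obtain h where h: "homeomorphism {0..1} (path_image g) g h"
      using homeomorphism_arc arcE[OF e] g_def by blast
    have hinv: "h (g t) = t" if "t \<in> {0..1}" for t using h that by (simp add: homeomorphism_def)
    have ghinv: "g (h y) = y" if "y \<in> path_image g" for y using h that by (simp add: homeomorphism_def)
    have conth: "continuous_on (path_image g) h" using h by (simp add: homeomorphism_def)
    define B where "B = ball q r - {q}"
    have cB: "connected B" unfolding B_def by (rule connected_punctured_ball) simp
    have chB: "connected (h ` B)"
      by (rule connected_continuous_image[OF continuous_on_subset[OF conth] cB]) (use bsub B_def in auto)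
    have contg: "continuous_on {0..1} g" using arcE[OF e] arc_imp_path path_def g_def by blast
    obtain d where d: "d > 0" "\<forall>x'\<in>{0..1}. dist x' (1/2) < d \<longrightarrow> dist (g x') (g (1/2)) < r"
    proof -
      have "1/2 \<in> {0..1::real}" by simp
      then show ?thesis using that contg r(1) unfolding continuous_on_iff by blast
    qed
    define \<delta> where "\<delta> = min (d/2) (1/4)"
    have dl: "0 < \<delta>" "\<delta> < d" "\<delta> \<le> 1/4" using d \<delta>_def by auto
    have t1: "g (1/2 - \<delta>) \<in> B"
    proof -
      have "dist (g (1/2 - \<delta>)) q < r" using d dl q_def by (auto simp: dist_real_def)
      moreover have "g (1/2 - \<delta>) \<noteq> q" using arc_inj[OF arcE[OF e], of "1/2 - \<delta>" "1/2"] dl q_def g_def by auto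
      ultimately show ?thesis unfolding B_def by (simp add: dist_commute)
    qed
    have t2: "g (1/2 + \<delta>) \<in> B"
    proof -
      have "dist (g (1/2 + \<delta>)) q < r" using d dl q_def by (auto simp: dist_real_def)
      moreover have "g (1/2 + \<delta>) \<noteq> q" using arc_inj[OF arcE[OF e], of "1/2 + \<delta>" "1/2"] dl q_def g_def by auto
      ultimately show ?thesis unfolding B_def by (simp add: dist_commute)
    qed
    have "1/2 - \<delta> \<in> h ` B" using t1 hinv[of "1/2 - \<delta>"] dl by force
    moreover have "1/2 + \<delta> \<in> h ` B" using t2 hinv[of "1/2 + \<delta>"] dl by force
    ultimately have "{1/2 - \<delta> .. 1/2 + \<delta>} \<subseteq> h ` B" using chB connected_contains_Icc by blast
    then have "1/2 \<in> h ` B" using dl by auto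
    then obtain y where y: "y \<in> B" "h y = 1/2" by auto
    have "y \<in> path_image g" using y bsub B_def by auto
    then have "g (h y) = y" using ghinv by blast
    then have "y = g (1/2)" using y(2) by simp
    then show False using y B_def q_def by auto
  qed
  then obtain z where z: "z \<in> ball q r" "z \<notin> DD" by blast
  define f where "f = connected_component_set (-DD) z"
  have f: "f \<in> components (-DD)" "z \<in> f" using comp_of[OF z(2)] f_def by auto
  have qD: "q \<in> DD" using pi_D[OF e] q_def g_def by (auto simp: path_image_def)
  obtain q' where q': "q' \<in> ball q r" "q' \<in> DD" "q' \<in> closure f"
    using ball_frontier[OF f(1) f(2) z(1) qD] r(1) by auto
  then have "q' \<in> g ` {0<..<1}" using r(2) by blast
  then obtain a where a: "0 < a" "a < 1" "q' = g a" by auto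
  have "e \<in> boundary_edges E \<gamma> f" using face_arc[OF f(1) e a(1,2)] q' a g_def by simp
  then show ?thesis using f by blast
qed


definition SX :: "('v \<Rightarrow> nat set) \<Rightarrow> nat set \<Rightarrow> complex set set \<Rightarrow> complex set" where
  "SX \<sigma> X F = \<Union>F \<union> (\<Union>e\<in>{e\<in>E. \<exists>w\<in>e. \<sigma> w \<inter> X \<noteq> {}}. \<gamma> e ` {0<..<1})
     \<union> pos ` {v\<in>V. \<sigma> v \<inter> X \<noteq> {} \<and> (\<exists>e\<in>E. v \<in> e)}"

lemma sees:
  assumes "e \<in> boundary_edges E \<gamma> f" "w \<in> e" "\<sigma> w \<inter> X \<noteq> {}"
  shows "face_colors E \<gamma> \<sigma> f \<inter> X \<noteq> {}"
  using assms unfolding face_colors_def by blast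

lemma SX_open:
  assumes F: "F \<subseteq> components (-DD)"
    and cov: "\<And>f. f \<in> components (-DD) \<Longrightarrow> face_colors E \<gamma> \<sigma> f \<inter> X \<noteq> {} \<Longrightarrow> f \<in> F"
  shows "open (SX \<sigma> X F)"
  unfolding open_contains_ball
proof
  fix x assume x: "x \<in> SX \<sigma> X F"
  have "x \<in> \<Union>F \<or> (\<exists>e\<in>E. (\<exists>w\<in>e. \<sigma> w \<inter> X \<noteq> {}) \<and> x \<in> \<gamma> e ` {0<..<1})
     \<or> (\<exists>v\<in>V. \<sigma> v \<inter> X \<noteq> {} \<and> (\<exists>e\<in>E. v \<in> e) \<and> x = pos v)"
    using x unfolding SX_def by blast
  then consider (face) f where "f \<in> F" "x \<in> f"
    | (arc) e w a where "e \<in> E" "w \<in> e" "\<sigma> w \<inter> X \<noteq> {}" "0 < a" "a < 1" "x = \<gamma> e a"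
    | (vert) v e0 where "v \<in> V" "\<sigma> v \<inter> X \<noteq> {}" "e0 \<in> E" "v \<in> e0" "x = pos v"
  proof (elim disjE)
    assume "x \<in> \<Union>F" then show thesis using that(1) by blast
  next
    assume "\<exists>e\<in>E. (\<exists>w\<in>e. \<sigma> w \<inter> X \<noteq> {}) \<and> x \<in> \<gamma> e ` {0<..<1}"
    then obtain e w a where ewa: "e \<in> E" "w \<in> e" "\<sigma> w \<inter> X \<noteq> {}" "a \<in> {0<..<1}" "x = \<gamma> e a" by blast
    have "0 < a" "a < 1" using ewa(4) by auto
    then show thesis using that(2) ewa(1,2,3,5) by blast
  next
    assume "\<exists>v\<in>V. \<sigma> v \<inter> X \<noteq> {} \<and> (\<exists>e\<in>E. v \<in> e) \<and> x = pos v"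
    then show thesis using that(3) by blast
  qed
  then show "\<exists>r>0. ball x r \<subseteq> SX \<sigma> X F"
  proof cases
    case face
    have "f \<in> components (-DD)" using F face(1) by blast
    then have "open f" by (rule face_open)
    then obtain r where r: "r > 0" "ball x r \<subseteq> f" using face(2) open_contains_ball by blast
    have "f \<subseteq> \<Union>F" using face(1) by blast
    then have "f \<subseteq> SX \<sigma> X F" unfolding SX_def by (intro le_supI1)
    then show ?thesis using r by blast
  next
    case arc
    obtain r where r: "r > 0" "ball (\<gamma> e a) r \<inter> DD \<subseteq> \<gamma> e ` {0<..<1}"
      by (rule ball_arc[OF arc(1,4,5)])
    have "ball x r \<subseteq> SX \<sigma> X F"
    proof
      fix z assume z: "z \<in> ball x r"
      show "z \<in> SX \<sigma> X F"
      proof (cases "z \<in> DD")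
        case True
        then have "z \<in> \<gamma> e ` {0<..<1}" using r z arc(6) by blast
        then show ?thesis using arc(1,2,3) unfolding SX_def by blast
      next
        case False
        define f where "f = connected_component_set (-DD) z"
        have f: "f \<in> components (-DD)" "z \<in> f" using comp_of[OF False] f_def by auto
        have xD: "x \<in> DD" using pi_D[OF arc(1)] arc(4,5,6) by (auto simp: path_image_def)
        have xb: "x \<in> ball x r" using r(1) by simp
        obtain q' where q': "q' \<in> ball x r" "q' \<in> DD" "q' \<in> closure f"
          by (rule ball_frontier[OF f(1) f(2) z xD xb])
        then have "q' \<in> \<gamma> e ` {0<..<1}" using r(2) arc(6) by blast
        then obtain a' where a': "0 < a'" "a' < 1" "q' = \<gamma> e a'" by auto
        have "e \<in> boundary_edges E \<gamma> f" using face_arc[OF f(1) arc(1) a'(1,2)] q' a' by simp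
        then have "f \<in> F" using cov[OF f(1)] sees arc(2,3) by blast
        then show ?thesis using f(2) unfolding SX_def by blast
      qed
    qed
    then show ?thesis using r(1) by blast
  next
    case vert
    obtain r where r: "r > 0" "ball (pos v) r \<inter> DD \<subseteq> insert (pos v) (\<Union>e\<in>{e\<in>E. v \<in> e}. \<gamma> e ` {0<..<1})"
      by (rule ball_vertex[OF vert(1)])
    have "ball x r \<subseteq> SX \<sigma> X F"
    proof
      fix z assume z: "z \<in> ball x r"
      show "z \<in> SX \<sigma> X F"
      proof (cases "z \<in> DD")
        case True
        then have "z \<in> insert (pos v) (\<Union>e\<in>{e\<in>E. v \<in> e}. \<gamma> e ` {0<..<1})" using r z vert(5) by blast
        then show ?thesis using vert unfolding SX_def by blast
      next
        case False
        define f where "f = connected_component_set (-DD) z"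
        have f: "f \<in> components (-DD)" "z \<in> f" using comp_of[OF False] f_def by auto
        have xD: "x \<in> DD" using vert(1,5) unfolding drawing_def by blast
        have xb: "x \<in> ball x r" using r(1) by simp
        obtain q' where q': "q' \<in> ball x r" "q' \<in> DD" "q' \<in> closure f"
          by (rule ball_frontier[OF f(1) f(2) z xD xb])
        then have "q' \<in> insert (pos v) (\<Union>e\<in>{e\<in>E. v \<in> e}. \<gamma> e ` {0<..<1})" using r(2) vert(5) by blast
        then have "\<exists>e\<in>E. v \<in> e \<and> e \<in> boundary_edges E \<gamma> f"
        proof
          assume "q' = pos v"
          then show ?thesis using face_vertex[OF f(1) vert(1,3,4)] q'(3) by simp
        next
          assume "q' \<in> (\<Union>e\<in>{e\<in>E. v \<in> e}. \<gamma> e ` {0<..<1})"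
          then obtain e a' where ea: "e \<in> E" "v \<in> e" "0 < a'" "a' < 1" "q' = \<gamma> e a'" by auto
          then show ?thesis using face_arc[OF f(1) ea(1,3,4)] q'(3) by auto
        qed
        then have "f \<in> F" using cov[OF f(1)] sees vert(2) by blast
        then show ?thesis using f(2) unfolding SX_def by blast
      qed
    qed
    then show ?thesis using r(1) by blast
  qed
qed

lemma pos_notSX:
  assumes F: "F \<subseteq> components (-DD)" and v: "v \<in> V" "\<sigma> v \<inter> X = {}"
  shows "pos v \<notin> SX \<sigma> X F"
proof
  assume a: "pos v \<in> SX \<sigma> X F"
  have "pos v \<in> DD" using v unfolding drawing_def by blast
  then have "pos v \<notin> \<Union>F" using F face_sub by blast
  moreover have "pos v \<notin> \<gamma> e ` {0<..<1}" if "e \<in> E" for e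
  proof
    assume "pos v \<in> \<gamma> e ` {0<..<1}"
    then obtain a where "a \<in> {0<..<1}" "pos v = \<gamma> e a" by blast
    then have "\<gamma> e a \<in> pos ` V" using v(1) by force
    then show False using int_notV[OF that, of a] \<open>a \<in> {0<..<1}\<close> by auto
  qed
  moreover have "pos v \<notin> pos ` {v\<in>V. \<sigma> v \<inter> X \<noteq> {} \<and> (\<exists>e\<in>E. v \<in> e)}"
    using injpos v by (auto simp: inj_on_def)
  ultimately show False using a unfolding SX_def by blast
qed

lemma edge_notSX:
  assumes F: "F \<subseteq> components (-DD)" and e: "e \<in> E" and ne: "\<forall>w\<in>e. \<sigma> w \<inter> X = {}"
  shows "path_image (\<gamma> e) \<inter> SX \<sigma> X F = {}"
proof -
  have "path_image (\<gamma> e) \<inter> \<Union>F = {}" using F face_sub pi_D[OF e] by blast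
  moreover have "path_image (\<gamma> e) \<inter> \<gamma> e' ` {0<..<1} = {}" if "e' \<in> E" "\<exists>w\<in>e'. \<sigma> w \<inter> X \<noteq> {}" for e'
  proof -
    have "e' \<noteq> e" using that ne by blast
    have "\<gamma> e' a \<notin> path_image (\<gamma> e)" if "a \<in> {0<..<1}" for a
      using int_notE[OF \<open>e' \<in> E\<close> e \<open>e' \<noteq> e\<close>, of a] that by auto
    then show ?thesis by blast
  qed
  moreover have "pos v \<notin> path_image (\<gamma> e)" if "v \<in> V" "\<sigma> v \<inter> X \<noteq> {}" for v
  proof
    assume "pos v \<in> path_image (\<gamma> e)"
    then have "pos v \<in> pos ` e" using imgV[OF e] that(1) by blast
    then have "v \<in> e" using injpos that(1) eV[OF e] by (auto simp: inj_on_def)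
    then show False using ne that by blast
  qed
  ultimately show ?thesis unfolding SX_def by blast
qed

lemma ends_in_pi: "e \<in> E \<Longrightarrow> pos ` e \<subseteq> path_image (\<gamma> e)"
  using imgV by blast

lemma SX_path:
  assumes F: "F \<subseteq> components (-DD)"
    and c: "conn_in E (V - verts_of_colors V \<sigma> X) s t"
  shows "connected_component (-(SX \<sigma> X F)) (pos s) (pos t)"
proof -
  define A where "A = V - verts_of_colors V \<sigma> X"
  define Rel where "Rel = {(x, y). {x, y} \<in> E \<and> x \<in> A \<and> y \<in> A}"
  have sA: "s \<in> A" and st: "(s, t) \<in> Rel\<^sup>*" using c unfolding conn_in_def A_def Rel_def by auto
  have ptA: "pos x \<notin> SX \<sigma> X F" if "x \<in> A" for x
    using pos_notSX[OF F] that unfolding A_def verts_of_colors_def by blast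
  show ?thesis using st
  proof (induction rule: rtrancl_induct)
    case base
    then show ?case using ptA[OF sA] by simp
  next
    case (step y z)
    then have yz: "{y, z} \<in> E" "y \<in> A" "z \<in> A" unfolding Rel_def by auto
    have ne: "\<forall>w\<in>{y, z}. \<sigma> w \<inter> X = {}" using yz unfolding A_def verts_of_colors_def by blast
    have "path_image (\<gamma> {y, z}) \<subseteq> -(SX \<sigma> X F)" using edge_notSX[OF F yz(1) ne] by blast
    moreover have "connected (path_image (\<gamma> {y, z}))"
      using arcE[OF yz(1)] arc_imp_path connected_path_image by blast
    moreover have "pos y \<in> path_image (\<gamma> {y, z})" "pos z \<in> path_image (\<gamma> {y, z})"
      using ends_in_pi[OF yz(1)] by auto
    ultimately have "connected_component (-(SX \<sigma> X F)) (pos y) (pos z)"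
      unfolding connected_component_def by blast
    then show ?case using step.IH connected_component_trans by blast
  qed
qed


lemma conn_step:
  assumes "conn_in E A s u" "{u, w} \<in> E" "w \<in> A"
  shows "conn_in E A s w"
proof -
  have "(s, u) \<in> {(x, y). {x, y} \<in> E \<and> x \<in> A \<and> y \<in> A}\<^sup>*" "s \<in> A" "u \<in> A"
    using assms(1) unfolding conn_in_def by auto
  moreover have "(u, w) \<in> {(x, y). {x, y} \<in> E \<and> x \<in> A \<and> y \<in> A}"
    using assms(2,3) \<open>u \<in> A\<close> by simp
  ultimately show ?thesis unfolding conn_in_def using assms(3)
    by (meson rtrancl_into_rtrancl)
qed

lemma SX_cases:
  assumes "x \<in> SX \<sigma> X F"
  shows "x \<in> \<Union>F \<or> (\<exists>e\<in>E. \<exists>w\<in>e. \<sigma> w \<inter> X \<noteq> {} \<and> (\<exists>a. 0 < a \<and> a < 1 \<and> x = \<gamma> e a))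
     \<or> (\<exists>v\<in>V. \<sigma> v \<inter> X \<noteq> {} \<and> (\<exists>e\<in>E. v \<in> e) \<and> x = pos v)"
proof -
  have "x \<in> \<Union>F \<or> (\<exists>e\<in>E. (\<exists>w\<in>e. \<sigma> w \<inter> X \<noteq> {}) \<and> x \<in> \<gamma> e ` {0<..<1})
     \<or> (\<exists>v\<in>V. \<sigma> v \<inter> X \<noteq> {} \<and> (\<exists>e\<in>E. v \<in> e) \<and> x = pos v)"
    using assms unfolding SX_def by blast
  then show ?thesis
  proof (elim disjE)
    assume "\<exists>e\<in>E. (\<exists>w\<in>e. \<sigma> w \<inter> X \<noteq> {}) \<and> x \<in> \<gamma> e ` {0<..<1}"
    then obtain e w a where ewa: "e \<in> E" "w \<in> e" "\<sigma> w \<inter> X \<noteq> {}" "a \<in> {0<..<1}" "x = \<gamma> e a" by blast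
    then have "0 < a" "a < 1" by auto
    then show ?thesis using ewa by blast
  qed blast+
qed

lemma UF_SX: "x \<in> \<Union>F \<Longrightarrow> x \<in> SX \<sigma> X F"
  unfolding SX_def by (intro UnI1)

lemma arc_SX:
  assumes "e \<in> E" "w \<in> e" "\<sigma> w \<inter> X \<noteq> {}" "0 < a" "a < 1"
  shows "\<gamma> e a \<in> SX \<sigma> X F"
proof -
  have "\<gamma> e a \<in> \<gamma> e ` {0<..<1}" using assms by auto
  then have "\<gamma> e a \<in> (\<Union>e\<in>{e\<in>E. \<exists>w\<in>e. \<sigma> w \<inter> X \<noteq> {}}. \<gamma> e ` {0<..<1})" using assms(1,2,3) by blast
  then show ?thesis unfolding SX_def by (intro UnI1 UnI2)
qed

lemma arcpt_D:
  assumes "e \<in> E" "0 < a" "a < 1" shows "\<gamma> e a \<in> DD"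
proof -
  have "\<gamma> e a \<in> path_image (\<gamma> e)" using assms by (auto simp: path_image_def)
  then show ?thesis using pi_D[OF assms(1)] by blast
qed

lemma vert_D: "v \<in> V \<Longrightarrow> pos v \<in> DD"
  unfolding drawing_def by blast

lemma final_contra:
  assumes noAB: "\<And>f. f \<in> components (-DD) \<Longrightarrow> face_colors E \<gamma> \<sigma> f \<inter> A \<noteq> {} \<Longrightarrow> face_colors E \<gamma> \<sigma> f \<inter> B = {}"
    and sep: "\<not> conn_in E (V - verts_of_colors V \<sigma> (A \<union> B)) s t"
    and cA: "conn_in E (V - verts_of_colors V \<sigma> A) s t"
    and cB: "conn_in E (V - verts_of_colors V \<sigma> B) s t"
  shows False
proof -
  define FA where "FA = {f \<in> components (-DD). face_colors E \<gamma> \<sigma> f \<inter> A \<noteq> {}}"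
  define FB where "FB = components (-DD) - FA"
  define SA where "SA = SX \<sigma> A FA"
  define SB where "SB = SX \<sigma> B FB"
  have FAc: "FA \<subseteq> components (-DD)" unfolding FA_def by blast
  have FBc: "FB \<subseteq> components (-DD)" unfolding FB_def by blast
  have oA: "open SA" unfolding SA_def
    by (rule SX_open[OF FAc]) (simp add: FA_def)
  have oB: "open SB" unfolding SB_def
  proof (rule SX_open[OF FBc])
    fix f assume "f \<in> components (-DD)" "face_colors E \<gamma> \<sigma> f \<inter> B \<noteq> {}"
    then show "f \<in> FB" using noAB unfolding FB_def FA_def by blast
  qed
  define N where "N = verts_of_colors V \<sigma> (A \<union> B)"
  define R where "R = {v. conn_in E (V - N) s v}"
  have RV: "R \<subseteq> V - N" unfolding R_def conn_in_def by auto
  have sV: "s \<in> V" "s \<notin> verts_of_colors V \<sigma> A" "s \<notin> verts_of_colors V \<sigma> B"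
    using cA cB unfolding conn_in_def by auto
  have tV: "t \<in> V" using cA unfolding conn_in_def by auto
  have sN: "s \<in> V - N" using sV unfolding N_def verts_of_colors_def by blast
  have sR: "s \<in> R" using sN unfolding R_def conn_in_def by auto
  have tR: "t \<notin> R" using sep unfolding R_def N_def by blast
  define K1 where "K1 = pos ` R \<union> (\<Union>e\<in>{e\<in>E. e \<subseteq> R}. path_image (\<gamma> e))"
  define K2 where "K2 = pos ` (V - R) \<union> (\<Union>e\<in>{e\<in>E. e \<inter> R = {}}. path_image (\<gamma> e))"
  have finR: "finite R" using RV finV finite_subset by blast
  have clK1: "closed K1" unfolding K1_def
  proof (intro closed_Un closed_UN)
    show "closed (pos ` R)" using finR by (simp add: finite_imp_closed)
    show "finite {e \<in> E. e \<subseteq> R}" using finE by simp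
    show "\<forall>e\<in>{e \<in> E. e \<subseteq> R}. closed (path_image (\<gamma> e))" using compact_pi compact_imp_closed by blast
  qed
  have clK2: "closed K2" unfolding K2_def
  proof (intro closed_Un closed_UN)
    show "closed (pos ` (V - R))" using finV by (simp add: finite_imp_closed)
    show "finite {e \<in> E. e \<inter> R = {}}" using finE by simp
    show "\<forall>e\<in>{e \<in> E. e \<inter> R = {}}. closed (path_image (\<gamma> e))" using compact_pi compact_imp_closed by blast
  qed
  have disjK: "K1 \<inter> K2 = {}"
  proof -
    have 1: "pos ` R \<inter> pos ` (V - R) = {}" using injpos RV by (auto simp: inj_on_def)
    have 2: "pos r \<notin> path_image (\<gamma> e)" if "r \<in> R" "e \<in> E" "e \<inter> R = {}" for r e
    proof
      assume "pos r \<in> path_image (\<gamma> e)"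
      then have "pos r \<in> pos ` e" using imgV[OF that(2)] that(1) RV by blast
      then have "r \<in> e" using injpos that(1) RV eV[OF that(2)] by (auto simp: inj_on_def)
      then show False using that by blast
    qed
    have 3: "pos w \<notin> path_image (\<gamma> e)" if "w \<in> V - R" "e \<in> E" "e \<subseteq> R" for w e
    proof
      assume "pos w \<in> path_image (\<gamma> e)"
      then have "pos w \<in> pos ` e" using imgV[OF that(2)] that(1) by blast
      then have "w \<in> e" using injpos that(1) eV[OF that(2)] by (auto simp: inj_on_def)
      then show False using that by blast
    qed
    have 4: "path_image (\<gamma> e) \<inter> path_image (\<gamma> e') = {}" if p: "e \<in> E" "e \<subseteq> R" "e' \<in> E" "e' \<inter> R = {}" for e e'
    proof -
      obtain u v where "u \<in> V" "v \<in> V" "u \<noteq> v" "e = {u, v}" "\<gamma> e 0 = pos u" "\<gamma> e 1 = pos v"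
        by (rule edge[OF p(1)])
      then have "e \<noteq> e'" using p by blast
      then have "path_image (\<gamma> e) \<inter> path_image (\<gamma> e') \<subseteq> pos ` (e \<inter> e')" using cross p by blast
      moreover have "e \<inter> e' = {}" using p by blast
      ultimately show ?thesis by simp
    qed
    show ?thesis unfolding K1_def K2_def using 1 2 3 4 by blast
  qed
  have disjAB: "SA \<inter> SB = {}"
  proof (rule ccontr)
    assume "SA \<inter> SB \<noteq> {}"
    then obtain x where xA: "x \<in> SA" and xB: "x \<in> SB" by blast
    note cA' = SX_cases[OF xA[unfolded SA_def]]
    note cB' = SX_cases[OF xB[unfolded SB_def]]
    show False
    proof (cases "x \<in> DD")
      case False
      then have "x \<in> \<Union>FA" "x \<in> \<Union>FB" using cA' cB' arcpt_D vert_D by blast+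
      then obtain f1 f2 where f: "f1 \<in> FA" "x \<in> f1" "f2 \<in> FB" "x \<in> f2" by blast
      then have "f1 = f2" using components_nonoverlap FAc FBc by blast
      then show False using f unfolding FB_def by blast
    next
      case True
      have nF: "x \<notin> \<Union>FA" "x \<notin> \<Union>FB" using True FAc FBc face_sub by blast+
      show False
      proof (cases "\<exists>v\<in>V. \<sigma> v \<inter> A \<noteq> {} \<and> (\<exists>e\<in>E. v \<in> e) \<and> x = pos v")
        case True
        then obtain v e0 where v: "v \<in> V" "\<sigma> v \<inter> A \<noteq> {}" "e0 \<in> E" "v \<in> e0" "x = pos v" by blast
        have "\<not> (\<exists>e\<in>E. \<exists>w\<in>e. \<sigma> w \<inter> B \<noteq> {} \<and> (\<exists>a. 0 < a \<and> a < 1 \<and> x = \<gamma> e a))"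
          using int_notV v(1,5) by blast
        then obtain w where w: "w \<in> V" "\<sigma> w \<inter> B \<noteq> {}" "x = pos w" using cB' nF by blast
        have "w = v" using injpos v w by (auto simp: inj_on_def)
        obtain f where f: "f \<in> components (-DD)" "e0 \<in> boundary_edges E \<gamma> f" using edge_face[OF v(3)] by blast
        have "face_colors E \<gamma> \<sigma> f \<inter> A \<noteq> {}" using sees[where \<sigma>=\<sigma> and X=A, OF f(2) v(4) v(2)] .
        moreover have "face_colors E \<gamma> \<sigma> f \<inter> B \<noteq> {}" using sees[where \<sigma>=\<sigma> and X=B, OF f(2) v(4)] w(2) \<open>w = v\<close> by blast
        ultimately show False using noAB f(1) by blast
      next
        case False
        then obtain e w a where ea: "e \<in> E" "w \<in> e" "\<sigma> w \<inter> A \<noteq> {}" "0 < a" "a < 1" "x = \<gamma> e a"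
          using cA' nF by blast
        have "\<not> (\<exists>v\<in>V. \<sigma> v \<inter> B \<noteq> {} \<and> (\<exists>e\<in>E. v \<in> e) \<and> x = pos v)"
          using int_notV[OF ea(1,4,5)] ea(6) by force
        then obtain e' w' a' where ea': "e' \<in> E" "w' \<in> e'" "\<sigma> w' \<inter> B \<noteq> {}" "0 < a'" "a' < 1" "x = \<gamma> e' a'"
          using cB' nF by blast
        show False
        proof (cases "e = e'")
          case True
          obtain f where f: "f \<in> components (-DD)" "e \<in> boundary_edges E \<gamma> f" using edge_face[OF ea(1)] by blast
          have "face_colors E \<gamma> \<sigma> f \<inter> A \<noteq> {}" using sees[where \<sigma>=\<sigma> and X=A, OF f(2) ea(2,3)] .
          moreover have "face_colors E \<gamma> \<sigma> f \<inter> B \<noteq> {}" using sees[where \<sigma>=\<sigma> and X=B, OF f(2)] ea'(2,3) True by blast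
          ultimately show False using noAB f(1) by blast
        next
          case False
          have "\<gamma> e' a' \<in> path_image (\<gamma> e')" using ea'(4,5) by (auto simp: path_image_def)
          then show False using int_notE[OF ea(1) ea'(1) False ea(4,5)] ea(6) ea'(6) by simp
        qed
      qed
    qed
  qed
  have Z: "-(SA \<union> SB) \<subseteq> K1 \<union> K2"
  proof
    fix x assume x: "x \<in> -(SA \<union> SB)"
    show "x \<in> K1 \<union> K2"
    proof (cases "x \<in> DD")
      case False
      define f where "f = connected_component_set (-DD) x"
      have f: "f \<in> components (-DD)" "x \<in> f" using comp_of[OF False] f_def by auto
      have "f \<in> FA \<or> f \<in> FB" using f(1) unfolding FB_def by blast
      then have "x \<in> \<Union>FA \<or> x \<in> \<Union>FB" using f(2) by blast
      then have "x \<in> SA \<union> SB" unfolding SA_def SB_def using UF_SX by blast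
      then show ?thesis using x by blast
    next
      case True
      show ?thesis
      proof (cases "x \<in> pos ` V")
        case True
        then obtain w where w: "w \<in> V" "x = pos w" by blast
        show ?thesis
        proof (cases "w \<in> R")
          case True then have "x \<in> pos ` R" using w by blast
          then show ?thesis unfolding K1_def by (intro UnI1)
        next
          case False then have "x \<in> pos ` (V - R)" using w by blast
          then show ?thesis unfolding K2_def by (intro UnI2 UnI1)
        qed
      next
        case False
        then obtain e where e: "e \<in> E" "x \<in> path_image (\<gamma> e)" using \<open>x \<in> DD\<close> unfolding drawing_def by blast
        obtain u1 w1 where uw: "u1 \<in> V" "w1 \<in> V" "u1 \<noteq> w1" "e = {u1, w1}" "\<gamma> e 0 = pos u1" "\<gamma> e 1 = pos w1"
          by (rule edge[OF e(1)])
        obtain a where a: "a \<in> {0..1}" "x = \<gamma> e a" using e(2) unfolding path_image_def by blast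
        have "a \<noteq> 0" "a \<noteq> 1" using False a uw by auto
        then have a01: "0 < a" "a < 1" using a by auto
        have eN: "y \<notin> N" if "y \<in> e" for y
        proof
          assume "y \<in> N"
          then have y: "\<sigma> y \<inter> A \<noteq> {} \<or> \<sigma> y \<inter> B \<noteq> {}" unfolding N_def verts_of_colors_def by blast
          have "x \<in> SA \<or> x \<in> SB"
            using y arc_SX[OF e(1) that _ a01] a(2) unfolding SA_def SB_def by blast
          then show False using x by blast
        qed
        show ?thesis
        proof (cases "e \<inter> R = {}")
          case True
          then show ?thesis unfolding K2_def using e by blast
        next
          case False
          have "u1 \<in> R \<or> w1 \<in> R" using False uw(4) by blast
          then have "u1 \<in> R \<and> w1 \<in> R"
          proof
            assume "u1 \<in> R"
            moreover have "w1 \<in> V - N" using uw eN by blast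
            ultimately have "w1 \<in> R" using conn_step[of "V - N" s u1 w1] e(1) uw(4) unfolding R_def by blast
            then show ?thesis using \<open>u1 \<in> R\<close> by blast
          next
            assume "w1 \<in> R"
            moreover have "u1 \<in> V - N" using uw eN by blast
            moreover have "{w1, u1} \<in> E" using e(1) uw(4) by (simp add: insert_commute)
            ultimately have "u1 \<in> R" using conn_step[of "V - N" s w1 u1] unfolding R_def by blast
            then show ?thesis using \<open>w1 \<in> R\<close> by blast
          qed
          then have "e \<subseteq> R" using uw(4) by blast
          then show ?thesis unfolding K1_def using e by blast
        qed
      qed
    qed
  qed
  obtain P where P: "connected P" "P \<subseteq> -SA" "pos s \<in> P" "pos t \<in> P"
    using SX_path[OF FAc cA] unfolding SA_def connected_component_def by blast
  obtain Q where Q: "connected Q" "Q \<subseteq> -SB" "pos s \<in> Q" "pos t \<in> Q"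
    using SX_path[OF FBc cB] unfolding SB_def connected_component_def by blast
  have a: "pos s \<in> K1" using sR unfolding K1_def by blast
  have b: "pos t \<in> K2" using tR tV unfolding K2_def by blast
  show False
    by (rule open_PB[OF oA oB disjAB clK1 clK2 disjK Z P(1) _ P(3,4) Q(1) _ Q(3,4) a b])
       (use P(2) Q(2) in auto)
qed

end


theorem lemma4p6:
  fixes V :: "'v set" and E :: "'v set set" and m :: nat and \<sigma> :: "'v \<Rightarrow> nat set"
    and pos :: "'v \<Rightarrow> complex" and \<gamma> :: "'v set \<Rightarrow> real \<Rightarrow> complex"
    and s t :: 'v and S :: "nat set"
  assumes "simple_graph V E"
    and "coloring V m \<sigma>"
    and "plane_embedding V E pos \<gamma>"
    and "color_connected V E m \<sigma>"
    and "s \<in> V" and "t \<in> V" and "conn_in E V s t"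
    and "minimal_color_separator V E m \<sigma> s t S"
  shows "cig_induces_connected V E m pos \<gamma> \<sigma> S"
proof (rule ccontr)
  assume nc: "\<not> cig_induces_connected V E m pos \<gamma> \<sigma> S"
  interpret pgraph V E pos \<gamma> using assms(1,3) by unfold_locales
  define Rel where "Rel = {(a, b). cig_edge V E m pos \<gamma> \<sigma> a b \<and> a \<in> S \<and> b \<in> S}"
  obtain i j where ij: "i \<in> S" "j \<in> S" "(i, j) \<notin> Rel\<^sup>*"
    using nc unfolding cig_induces_connected_def Rel_def by blast
  have ms1: "S \<subseteq> {1..m}" and ms2: "\<not> conn_in E (V - verts_of_colors V \<sigma> S) s t"
    using assms(8) unfolding minimal_color_separator_def color_separator_def by auto
  have ms3: "\<not> color_separator V E m \<sigma> s t S'" if "S' \<subset> S" for S'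
    using assms(8) that unfolding minimal_color_separator_def by blast
  define A where "A = {k \<in> S. (i, k) \<in> Rel\<^sup>*}"
  define B where "B = S - A"
  have iA: "i \<in> A" using ij(1) unfolding A_def by simp
  have jA: "j \<notin> A" using ij(3) unfolding A_def by simp
  have AS: "A \<subset> S" using jA ij(2) unfolding A_def by blast
  have BS: "B \<subset> S" using iA ij(1) unfolding B_def by blast
  have cA: "conn_in E (V - verts_of_colors V \<sigma> A) s t"
    using ms3[OF AS] ms1 AS unfolding color_separator_def by blast
  have cB: "conn_in E (V - verts_of_colors V \<sigma> B) s t"
    using ms3[OF BS] ms1 BS unfolding color_separator_def by blast
  have AB: "A \<union> B = S" unfolding B_def A_def by blast
  have noAB: "face_colors E \<gamma> \<sigma> f \<inter> B = {}"
    if f: "f \<in> components (- drawing V E pos \<gamma>)" and fa: "face_colors E \<gamma> \<sigma> f \<inter> A \<noteq> {}" for f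
  proof (rule ccontr)
    assume "face_colors E \<gamma> \<sigma> f \<inter> B \<noteq> {}"
    then obtain l where l: "l \<in> face_colors E \<gamma> \<sigma> f" "l \<in> B" by blast
    obtain k where k: "k \<in> face_colors E \<gamma> \<sigma> f" "k \<in> A" using fa by blast
    have kS: "k \<in> S" "l \<in> S" using k l unfolding A_def B_def by auto
    have "k \<noteq> l" using k l unfolding B_def by blast
    moreover have "k \<in> {1..m}" "l \<in> {1..m}" using kS ms1 by auto
    moreover have "f \<in> faces V E pos \<gamma>" using f faces_eq by simp
    ultimately have "cig_edge V E m pos \<gamma> \<sigma> k l"
      unfolding cig_edge_def using k(1) l(1) by blast
    then have "(k, l) \<in> Rel" using kS unfolding Rel_def by blast
    moreover have "(i, k) \<in> Rel\<^sup>*" using k(2) unfolding A_def by blast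
    ultimately have "(i, l) \<in> Rel\<^sup>*" by (meson rtrancl_into_rtrancl)
    then have "l \<in> A" using kS unfolding A_def by blast
    then show False using l(2) unfolding B_def by blast
  qed
  have sep: "\<not> conn_in E (V - verts_of_colors V \<sigma> (A \<union> B)) s t" using ms2 AB by simp
  show False by (rule final_contra[OF noAB sep cA cB])
qed

end
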